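(* Let $I=\{a,b\}$ with positive integers $a<b$. The sequence $(C_0(I),\ldots,C_{s(I)}(I))$ of Naruse-Newton coefficients of $I$ is unimodal if and only if $a=1$, or $a=2$, or $I=\{3,4\}$.
   Context: Partitions are drawn as Young diagrams $\mathbb{D}(\lambda)$ in English notation; $c_{i,j}$ is the cell in row $i$, column $j$. The hook length $h_\lambda(c)$ is the number of cells of $\mathbb{D}(\lambda)$ weakly right of $c$ in its row or weakly below $c$ in its column (counting $c$ once). For $\mu\subseteq\lambda$, an excited diagram of $\lambda/\mu$ is a subset of $\mathbb{D}(\lambda)$ obtained from $\mathbb{D}(\mu)$ by repeatedly replacing a cell $c_{i,j}\in D$ by $c_{i+1,j+1}$, allowed iff $c_{i+1,j+1}\in\mathbb{D}(\lambda)$ and none of $c_{i,j+1},c_{i+1,j},c_{i+1,j+1}$ lies in $D$; $\mathbb{E}(\lambda/\mu)$ is their set. A ribbon with $n$ cells is read from its lower-left to its upper-right cell, each successive cell directly right of or directly above the previous; it corresponds to the set of $i\in\{1,\ldots,n-1\}$ with cell $i$ directly below cell $i+1$. A descent set is a non-empty finite set $I$ of positive integers; $\lambda^I$ is the unique partition with $\lambda^I_1=\lambda^I_2$ such that the cells $c_{i,j}\in\mathbb{D}(\lambda^I)$ with fewer than three of $c_{i,j+1},c_{i+1,j},c_{i+1,j+1}$ in $\mathbb{D}(\lambda^I)$ form a ribbon corresponding to $I$; this ribbon is $\mathbb{D}(\lambda^I)\setminus\mathbb{D}(\mu^I)$ for a partition $\mu^I$. Let $s(I)=\lambda^I_1-1$.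 Naruse-Newton coefficients: every excited diagram of $\lambda^I/\mu^I$ meets row 1 in $\{c_{1,1},\ldots,c_{1,r}\}$, $0\le r\le s$; for $0\le j\le s(I)$, $C_j(I)=\sum_D\prod_{c\in D,\,c\notin\text{row }1}h_{\lambda^I}(c)$, summed over $D\in\mathbb{E}(\lambda^I/\mu^I)$ with exactly $s-j$ cells in row 1. A sequence $(x_k)_{k=0}^m$ is unimodal if there is an index $i$ with $0\le i\le m$ such that $x_0\le x_1\le\cdots\le x_i$ and $x_i\ge x_{i+1}\ge\cdots\ge x_m$. *)

theory Defs
  imports Main
begin

type_synonym cell = "nat \<times> nat"  \<comment> \<open>(row, column), 1-indexed, English notation\<close>

definition is_partition :: "nat list \<Rightarrow> bool" where
  "is_partition lam \<longleftrightarrow> sorted_wrt (\<ge>) lam \<and> 0 \<notin> set lam"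

definition part :: "nat list \<Rightarrow> nat \<Rightarrow> nat" where
  "part lam i = (if 1 \<le> i \<and> i \<le> length lam then lam ! (i - 1) else 0)"

definition diagram :: "nat list \<Rightarrow> cell set" where
  "diagram lam = {(i, j). 1 \<le> i \<and> i \<le> length lam \<and> 1 \<le> j \<and> j \<le> lam ! (i - 1)}"

definition hook :: "nat list \<Rightarrow> cell \<Rightarrow> nat" where
  "hook lam c = card {c' \<in> diagram lam.
      (fst c' = fst c \<and> snd c' \<ge> snd c) \<or> (snd c' = snd c \<and> fst c' \<ge> fst c)}"

inductive_set excited :: "nat list \<Rightarrow> nat list \<Rightarrow> cell set set" for lam mu where
  base: "diagram mu \<in> excited lam mu"
| step: "\<lbrakk> D \<in> excited lam mu; (i, j) \<in> D; (i + 1, j + 1) \<in> diagram lam;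
           (i, j + 1) \<notin> D; (i + 1, j) \<notin> D; (i + 1, j + 1) \<notin> D \<rbrakk>
          \<Longrightarrow> insert (i + 1, j + 1) (D - {(i, j)}) \<in> excited lam mu"

definition rim :: "nat list \<Rightarrow> cell set" where
  "rim lam = {c \<in> diagram lam.
     card ({(fst c, snd c + 1), (fst c + 1, snd c), (fst c + 1, snd c + 1)} \<inter> diagram lam) < 3}"

text \<open>R is a ribbon (read lower-left to upper-right, each cell directly right of or directly
  above the previous) corresponding to the descent set I.\<close>
definition ribbon_of :: "cell set \<Rightarrow> nat set \<Rightarrow> bool" where
  "ribbon_of R I \<longleftrightarrow> (\<exists>n c. n \<ge> 1 \<and> bij_betw c {1..n} R \<and>
     (\<forall>k \<in> {1..<n}.
        c (Suc k) = (fst (c k), snd (c k) + 1) \<or>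
        (fst (c (Suc k)) + 1 = fst (c k) \<and> snd (c (Suc k)) = snd (c k))) \<and>
     I = {i \<in> {1..<n}. fst (c (Suc i)) + 1 = fst (c i) \<and> snd (c (Suc i)) = snd (c i)})"

definition lambdaI :: "nat set \<Rightarrow> nat list" where
  "lambdaI I = (THE lam. is_partition lam \<and> part lam 1 = part lam 2 \<and> ribbon_of (rim lam) I)"

definition muI :: "nat set \<Rightarrow> nat list" where
  "muI I = (THE mu. is_partition mu \<and> diagram mu \<subseteq> diagram (lambdaI I) \<and>
                    diagram (lambdaI I) - diagram mu = rim (lambdaI I))"

definition sI :: "nat set \<Rightarrow> nat" where
  "sI I = part (lambdaI I) 1 - 1"

definition NN_coeff :: "nat set \<Rightarrow> nat \<Rightarrow> nat" where
  "NN_coeff I j = (\<Sum>D \<in> {D \<in> excited (lambdaI I) (muI I). card {c \<in> D. fst c = 1} = sI I - j}.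
                     \<Prod>c \<in> {c \<in> D. fst c \<noteq> 1}. hook (lambdaI I) c)"

definition unimodal :: "(nat \<Rightarrow> 'a::linorder) \<Rightarrow> nat \<Rightarrow> bool" where
  "unimodal x m \<longleftrightarrow> (\<exists>i \<le> m. (\<forall>k < i. x k \<le> x (Suc k)) \<and>
                               (\<forall>k. i \<le> k \<and> k < m \<longrightarrow> x k \<ge> x (Suc k)))"

end

theory Submission
  imports Defs
begin


lemma diagram_mem: "(i,j) \<in> diagram lam \<longleftrightarrow> 1 \<le> i \<and> i \<le> length lam \<and> 1 \<le> j \<and> j \<le> lam ! (i - 1)"
  by (simp add: diagram_def)

lemma rim_char: "rim lam = {c \<in> diagram lam. \<not> ((fst c, snd c + 1) \<in> diagram lam \<and> (fst c + 1, snd c) \<in> diagram lam \<and> (fst c + 1, snd c + 1) \<in> diagram lam)}"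
proof -
  have *: "card (S \<inter> D) < 3 \<longleftrightarrow> \<not> S \<subseteq> D" if "S = {(i, j+1), (i+1, j), (i+1, j+1)}" for S D and i j :: nat
  proof -
    have c3: "card S = 3" using that by auto
    have f: "finite S" using that by auto
    have "card (S \<inter> D) \<le> card S" by (rule card_mono[OF f]) auto
    moreover have "card (S \<inter> D) = card S \<longleftrightarrow> S \<inter> D = S"
      using card_subset_eq[OF f, of "S \<inter> D"] by auto
    ultimately show ?thesis using c3 by auto
  qed
  show ?thesis unfolding rim_def
  proof (rule Collect_cong)
    fix c :: cell
    have "card ({(fst c, snd c + 1), (fst c + 1, snd c), (fst c + 1, snd c + 1)} \<inter> diagram lam) < 3 \<longleftrightarrow>
      \<not> {(fst c, snd c + 1), (fst c + 1, snd c), (fst c + 1, snd c + 1)} \<subseteq> diagram lam"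
      by (rule *) simp
    thus "(c \<in> diagram lam \<and> card ({(fst c, snd c + 1), (fst c + 1, snd c), (fst c + 1, snd c + 1)} \<inter> diagram lam) < 3) =
      (c \<in> diagram lam \<and> \<not> ((fst c, snd c + 1) \<in> diagram lam \<and> (fst c + 1, snd c) \<in> diagram lam \<and> (fst c + 1, snd c + 1) \<in> diagram lam))"
      by simp
  qed
qed

lemma diagram_nonzero: "c \<in> diagram lam \<Longrightarrow> 1 \<le> fst c \<and> fst c \<le> length lam \<and> 1 \<le> snd c \<and> snd c \<le> lam ! (fst c - 1)"
  by (cases c) (simp add: diagram_def)

lemma diagram_inj:
  assumes "0 \<notin> set m1" "0 \<notin> set m2" "diagram m1 = diagram m2"
  shows "m1 = m2"
proof -
  have row1: "(i,1) \<in> diagram m \<longleftrightarrow> 1 \<le> i \<and> i \<le> length m" if "0 \<notin> set m" for m i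
  proof -
    have "m ! (i-1) \<noteq> 0" if "i \<le> length m" "1 \<le> i"
    proof -
      have "i - 1 < length m" using that by simp
      hence "m ! (i-1) \<in> set m" by (rule nth_mem)
      thus ?thesis using \<open>0 \<notin> set m\<close> by metis
    qed
    thus ?thesis by (auto simp: diagram_def)
  qed
  have len: "length m1 = length m2"
  proof (rule ccontr)
    assume "length m1 \<noteq> length m2"
    then consider "length m1 < length m2" | "length m2 < length m1" by linarith
    thus False
    proof cases
      case 1
      hence "(length m2, 1) \<in> diagram m2" using row1[OF assms(2)] by auto
      moreover have "(length m2, 1) \<notin> diagram m1" using row1[OF assms(1)] 1 by auto
      ultimately show False using assms(3) by simp
    next
      case 2
      hence "(length m1, 1) \<in> diagram m1" using row1[OF assms(1)] by auto
      moreover have "(length m1, 1) \<notin> diagram m2" using row1[OF assms(2)] 2 by auto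
      ultimately show False using assms(3) by simp
    qed
  qed
  have mem: "(i+1, m ! i) \<in> diagram m" if "0 \<notin> set m" "i < length m" for m i
  proof -
    have "m ! i \<in> set m" using that(2) by (rule nth_mem)
    hence "m ! i \<noteq> 0" using that(1) by metis
    thus ?thesis using that(2) by (simp add: diagram_def)
  qed
  show ?thesis
  proof (rule nth_equalityI[OF len])
    fix i assume i: "i < length m1"
    have a: "(i+1, m1 ! i) \<in> diagram m2" using mem[OF assms(1) i] assms(3) by simp
    have b: "(i+1, m2 ! i) \<in> diagram m1" using mem[OF assms(2)] i len assms(3) by simp
    have "m1 ! i \<le> m2 ! i" using a by (simp add: diagram_def)
    moreover have "m2 ! i \<le> m1 ! i" using b by (simp add: diagram_def)
    ultimately show "m1 ! i = m2 ! i" by simp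
  qed
qed


lemma diagram3: "(i,j) \<in> diagram [p,q,r] \<longleftrightarrow>
   1 \<le> j \<and> ((i = 1 \<and> j \<le> p) \<or> (i = 2 \<and> j \<le> q) \<or> (i = 3 \<and> j \<le> r))"
  by (auto simp: diagram_def numeral_eq_Suc nth_Cons' split: if_splits)

definition R0 :: "nat \<Rightarrow> nat \<Rightarrow> cell set" where
  "R0 a b = {(i,j). (i = 3 \<and> 1 \<le> j \<and> j \<le> a) \<or> (i = 2 \<and> a \<le> j \<and> j \<le> b - 1) \<or> (i = 1 \<and> j = b - 1)}"

lemma rim_lam0: assumes "0 < a" "a < b" shows "rim [b-1,b-1,a] = R0 a b"
proof -
  have "c \<in> rim [b-1,b-1,a] \<longleftrightarrow> c \<in> R0 a b" for c
  proof (cases c)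
    case (Pair i j)
    show ?thesis unfolding rim_char Pair using assms
      by (auto simp: diagram3 R0_def)
  qed
  thus ?thesis by blast
qed

definition cc0 :: "nat \<Rightarrow> nat \<Rightarrow> nat \<Rightarrow> cell" where
  "cc0 a b k = (if k \<le> a then (3,k) else if k \<le> b then (2, k - 1) else (1, b - 1))"

lemma partition_lam0: assumes "0 < a" "a < b" shows "is_partition [b-1,b-1,a]"
  using assms by (auto simp: is_partition_def)

lemma ribbon_lam0: assumes "0 < a" "a < b" shows "ribbon_of (rim [b-1,b-1,a]) {a,b}"
  unfolding ribbon_of_def rim_lam0[OF assms]
proof (intro exI conjI ballI)
  show "1 \<le> b + 1" by simp
  show "bij_betw (cc0 a b) {1..b+1} (R0 a b)"
  proof (rule bij_betw_imageI)
    show "inj_on (cc0 a b) {1..b + 1}"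
      by (auto simp: inj_on_def cc0_def split: if_splits)
    show "cc0 a b ` {1..b + 1} = R0 a b"
    proof
      show "cc0 a b ` {1..b + 1} \<subseteq> R0 a b" using assms by (auto simp: cc0_def R0_def)
      show "R0 a b \<subseteq> cc0 a b ` {1..b + 1}"
      proof
        fix c assume "c \<in> R0 a b"
        then obtain i j where c: "c = (i,j)" and h: "(i = 3 \<and> 1 \<le> j \<and> j \<le> a) \<or> (i = 2 \<and> a \<le> j \<and> j \<le> b - 1) \<or> (i = 1 \<and> j = b - 1)"
          by (auto simp: R0_def)
        from h consider "i = 3" "1 \<le> j" "j \<le> a" | "i = 2" "a \<le> j" "j \<le> b - 1" | "i = 1" "j = b - 1" by blast
        thus "c \<in> cc0 a b ` {1..b + 1}"
        proof cases
          case 1 thus ?thesis using c assms by (intro image_eqI[of _ _ j]) (auto simp: cc0_def)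
        next
          case 2 thus ?thesis using c assms by (intro image_eqI[of _ _ "j+1"]) (auto simp: cc0_def)
        next
          case 3 thus ?thesis using c assms by (intro image_eqI[of _ _ "b+1"]) (auto simp: cc0_def)
        qed
      qed
    qed
  qed
  fix k assume "k \<in> {1..<b+1}"
  thus "cc0 a b (Suc k) = (fst (cc0 a b k), snd (cc0 a b k) + 1) \<or>
          fst (cc0 a b (Suc k)) + 1 = fst (cc0 a b k) \<and> snd (cc0 a b (Suc k)) = snd (cc0 a b k)"
    using assms by (auto simp: cc0_def)
next
  show "{a, b} = {i \<in> {1..<b + 1}. fst (cc0 a b (Suc i)) + 1 = fst (cc0 a b i) \<and> snd (cc0 a b (Suc i)) = snd (cc0 a b i)}"
    using assms by (auto simp: cc0_def split: if_splits)
qed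


lemma lam_unique:
  assumes ab: "0 < a" "a < b" and P: "is_partition lam" and E: "part lam 1 = part lam 2"
    and Rb: "ribbon_of (rim lam) {a,b}"
  shows "lam = [b-1,b-1,a]"
proof -
  from Rb obtain n c where n1: "n \<ge> 1" and bij: "bij_betw c {1..n} (rim lam)"
    and st: "\<forall>k \<in> {1..<n}. c (Suc k) = (fst (c k), snd (c k) + 1) \<or>
        (fst (c (Suc k)) + 1 = fst (c k) \<and> snd (c (Suc k)) = snd (c k))"
    and I: "{a,b} = {i \<in> {1..<n}. fst (c (Suc i)) + 1 = fst (c i) \<and> snd (c (Suc i)) = snd (c i)}"
    unfolding ribbon_of_def by blast
  have bn: "b < n" and a1: "1 \<le> a" using I ab by auto
  have up: "fst (c (Suc k)) + 1 = fst (c k) \<and> snd (c (Suc k)) = snd (c k)" if "k = a \<or> k = b" for k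
    using I that by blast
  have right: "c (Suc k) = (fst (c k), snd (c k) + 1)" if "1 \<le> k" "k < n" "k \<noteq> a" "k \<noteq> b" for k
  proof -
    have "k \<notin> {i \<in> {1..<n}. fst (c (Suc i)) + 1 = fst (c i) \<and> snd (c (Suc i)) = snd (c i)}"
      using that I by blast
    thus ?thesis using st that by auto
  qed
  define u where "u k = (if k \<le> a then 0 else if k \<le> b then 1 else (2::nat))" for k
  have pos: "fst (c k) + u k = fst (c 1) \<and> snd (c k) + u k = snd (c 1) + (k - 1)" if "1 \<le> k" "k \<le> n" for k
    using that
  proof (induction k rule: dec_induct)
    case base thus ?case using ab by (simp add: u_def)
  next
    case (step k)
    show ?case
    proof (cases "k = a \<or> k = b")
      case True
      thus ?thesis using up[OF True] step ab by (auto simp: u_def)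
    next
      case False
      thus ?thesis using right[of k] step ab by (auto simp: u_def)
    qed
  qed
  have rim_sub: "rim lam \<subseteq> diagram lam" by (auto simp: rim_def)
  have crim: "c k \<in> rim lam" if "1 \<le> k" "k \<le> n" for k using bij that by (auto simp: bij_betw_def)
  have inrim: "\<exists>k. 1 \<le> k \<and> k \<le> n \<and> c k = x" if "x \<in> rim lam" for x
  proof -
    have "x \<in> c ` {1..n}" using bij that by (auto simp: bij_betw_def)
    thus ?thesis by force
  qed
  have cd: "c k \<in> diagram lam" if "1 \<le> k" "k \<le> n" for k using crim[OF that] rim_sub by blast
  define l where "l = length lam"
  have nz: "0 \<notin> set lam" using P by (simp add: is_partition_def)
  have sorted: "sorted_wrt (\<ge>) lam" using P by (simp add: is_partition_def)
  have l1: "l \<ge> 1" using cd[of 1] n1 by (auto simp: diagram_def l_def)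
  have lpos: "lam ! i \<ge> 1" if "i < l" for i using nz nth_mem[of i lam] that l_def
    by (metis less_one not_le)
  have mono: "lam ! j \<le> lam ! i" if "i < j" "j < l" for i j
    using sorted that by (auto simp: sorted_wrt_iff_nth_less l_def)
  have "(l, 1) \<in> rim lam" unfolding rim_char using l1 lpos[of "l-1"]
    by (auto simp: diagram_def l_def)
  then obtain k0 where k0: "1 \<le> k0" "k0 \<le> n" "c k0 = (l,1)" using inrim by blast
  have R_le: "fst (c 1) \<le> l" using cd[of 1] n1 by (auto simp: diagram_def l_def)
  have "l + u k0 = fst (c 1)" using pos[OF k0(1,2)] k0(3) by simp
  hence Rl: "fst (c 1) = l" using R_le by simp
  have lne: "lam \<noteq> []" using l1 l_def by auto
  have "(1, lam ! 0) \<in> rim lam" unfolding rim_char using l1 lne lpos[of 0] mono[of 0 1]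
    by (auto simp: diagram_def l_def)
  then obtain k1 where k1: "1 \<le> k1" "k1 \<le> n" "c k1 = (1, lam ! 0)" using inrim by blast
  have "1 + u k1 = fst (c 1)" using pos[OF k1(1,2)] k1(3) by simp
  hence R3: "fst (c 1) \<le> 3" by (simp add: u_def split: if_splits)
  have "fst (c n) + 2 = fst (c 1)" using pos[of n] n1 bn ab by (simp add: u_def)
  moreover have "fst (c n) \<ge> 1" using cd[of n] n1 by (auto simp: diagram_def)
  ultimately have R: "fst (c 1) = 3" using R3 by simp
  hence l3: "l = 3" using Rl by simp
  have "(3, lam ! 2) \<in> rim lam" unfolding rim_char using l3 lpos[of 2]
    by (auto simp: diagram_def l_def)
  then obtain k3 where k3: "1 \<le> k3" "k3 \<le> n" "c k3 = (3, lam ! 2)" using inrim by blast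
  have "3 + u k3 = 3" and s3: "lam ! 2 + u k3 = snd (c 1) + (k3 - 1)" using pos[OF k3(1,2)] k3(3) R by auto
  hence "u k3 = 0" by simp
  hence k3a: "k3 \<le> a" by (simp add: u_def split: if_splits)
  have J: "snd (c 1) = 1"
  proof -
    have "1 + u k0 = snd (c 1) + (k0 - 1)" using pos[OF k0(1,2)] k0(3) by simp
    moreover have "u k0 = 0" using \<open>l + u k0 = fst (c 1)\<close> Rl by simp
    moreover have "snd (c 1) \<ge> 1" using cd[of 1] n1 by (auto simp: diagram_def)
    ultimately show ?thesis using k0 by simp
  qed
  have L2le: "lam ! 2 \<le> a" using s3 \<open>u k3 = 0\<close> J k3a k3 by simp
  have "c a = (3, a)" using pos[of a] a1 bn ab R J by (cases "c a") (simp add: u_def)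
  hence "(3, a) \<in> diagram lam" using cd[of a] a1 bn ab by simp
  hence "a \<le> lam ! 2" by (simp add: diagram_def)
  hence L2: "lam ! 2 = a" using L2le by simp
  have "(2, lam ! 1) \<in> rim lam" unfolding rim_char using l3 lpos[of 1] mono[of 1 2]
    by (auto simp: diagram_def l_def)
  then obtain k2 where k2: "1 \<le> k2" "k2 \<le> n" "c k2 = (2, lam ! 1)" using inrim by blast
  have "2 + u k2 = 3" and s2: "lam ! 1 + u k2 = 1 + (k2 - 1)" using pos[OF k2(1,2)] k2(3) R J by auto
  hence "u k2 = 1" by simp
  hence k2b: "a < k2 \<and> k2 \<le> b" by (simp add: u_def split: if_splits)
  have L1le: "lam ! 1 \<le> b - 1" using s2 \<open>u k2 = 1\<close> k2b k2 by linarith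
  have "c b = (2, b - 1)" using pos[of b] a1 bn ab R J by (cases "c b") (simp add: u_def)
  hence "(2, b - 1) \<in> diagram lam" using cd[of b] a1 bn ab by simp
  hence "b - 1 \<le> lam ! 1" by (simp add: diagram_def)
  hence L1: "lam ! 1 = b - 1" using L1le by simp
  have L0: "lam ! 0 = b - 1" using E L1 l3 by (simp add: part_def l_def)
  show ?thesis
    by (rule nth_equalityI) (use l3 L0 L1 L2 in \<open>auto simp: l_def less_Suc_eq numeral_eq_Suc\<close>)
qed


lemma lambdaI_ab: assumes "0 < a" "a < b" shows "lambdaI {a,b} = [b-1,b-1,a]"
  unfolding lambdaI_def
proof (rule the_equality)
  show "is_partition [b-1,b-1,a] \<and> part [b-1,b-1,a] 1 = part [b-1,b-1,a] 2 \<and> ribbon_of (rim [b-1,b-1,a]) {a,b}"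
    using partition_lam0[OF assms] ribbon_lam0[OF assms] by (simp add: part_def)
  show "\<And>lam. is_partition lam \<and> part lam 1 = part lam 2 \<and> ribbon_of (rim lam) {a, b} \<Longrightarrow> lam = [b - 1, b - 1, a]"
    using lam_unique[OF assms] by blast
qed

definition M0 :: "nat \<Rightarrow> nat \<Rightarrow> cell set" where
  "M0 a b = {(i,j). 1 \<le> j \<and> ((i = 1 \<and> j \<le> b - 2) \<or> (i = 2 \<and> j \<le> a - 1))}"

definition mu0 :: "nat \<Rightarrow> nat \<Rightarrow> nat list" where
  "mu0 a b = (if a = 1 then (if b = 2 then [] else [b-2]) else [b-2,a-1])"

lemma mu0_props: assumes "0 < a" "a < b"
  shows "is_partition (mu0 a b)" "diagram (mu0 a b) = M0 a b"
proof -
  show "is_partition (mu0 a b)" using assms by (auto simp: mu0_def is_partition_def)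
  show "diagram (mu0 a b) = M0 a b"
  proof (cases "a = 1")
    case True
    show ?thesis
    proof (cases "b = 2")
      case True
      thus ?thesis using \<open>a = 1\<close> by (auto simp: mu0_def M0_def diagram_def)
    next
      case False
      thus ?thesis using \<open>a = 1\<close> by (auto simp: mu0_def M0_def diagram_def)
    qed
  next
    case False
    thus ?thesis using assms by (auto simp: mu0_def M0_def diagram_def nth_Cons' split: if_splits)
  qed
qed

lemma M0_diff: assumes "0 < a" "a < b" shows "diagram [b-1,b-1,a] - rim [b-1,b-1,a] = M0 a b"
  "M0 a b \<subseteq> diagram [b-1,b-1,a]"
proof -
  have "c \<in> diagram [b-1,b-1,a] - rim [b-1,b-1,a] \<longleftrightarrow> c \<in> M0 a b" for c
    using assms unfolding rim_lam0[OF assms] by (cases c) (auto simp: R0_def M0_def diagram3)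
  thus "diagram [b-1,b-1,a] - rim [b-1,b-1,a] = M0 a b" by blast
  show "M0 a b \<subseteq> diagram [b-1,b-1,a]" using assms by (auto simp: M0_def diagram3)
qed

lemma muI_ab: assumes "0 < a" "a < b" shows "diagram (muI {a,b}) = M0 a b"
proof -
  have "muI {a,b} = mu0 a b"
    unfolding muI_def lambdaI_ab[OF assms]
  proof (rule the_equality)
    show "is_partition (mu0 a b) \<and> diagram (mu0 a b) \<subseteq> diagram [b-1,b-1,a] \<and>
        diagram [b-1,b-1,a] - diagram (mu0 a b) = rim [b-1,b-1,a]"
      using mu0_props[OF assms] M0_diff[OF assms] rim_def by auto
    fix mu assume h: "is_partition mu \<and> diagram mu \<subseteq> diagram [b-1,b-1,a] \<and>
        diagram [b-1,b-1,a] - diagram mu = rim [b-1,b-1,a]"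
    have "diagram mu = diagram [b-1,b-1,a] - rim [b-1,b-1,a]" using h by blast
    hence "diagram mu = diagram (mu0 a b)" using M0_diff[OF assms] mu0_props[OF assms] by simp
    thus "mu = mu0 a b" using diagram_inj h mu0_props[OF assms] by (auto simp: is_partition_def)
  qed
  thus ?thesis using mu0_props[OF assms] by simp
qed

lemma sI_ab: assumes "0 < a" "a < b" shows "sI {a,b} = b - 2"
  using assms by (simp add: sI_def lambdaI_ab part_def)



definition Dxw :: "nat \<Rightarrow> nat \<Rightarrow> nat \<Rightarrow> nat \<Rightarrow> cell set" where
  "Dxw a b x w = {(i,j). (i = 1 \<and> 1 \<le> j \<and> j \<le> x) \<or> (i = 2 \<and> 1 \<le> j \<and> j \<le> w) \<or>
      (i = 2 \<and> x + 2 \<le> j \<and> j \<le> b - 1) \<or> (i = 3 \<and> w + 2 \<le> j \<and> j \<le> a)}"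

lemma Dxw_mem: "(i,j) \<in> Dxw a b x w \<longleftrightarrow> (i = 1 \<and> 1 \<le> j \<and> j \<le> x) \<or> (i = 2 \<and> 1 \<le> j \<and> j \<le> w) \<or>
      (i = 2 \<and> x + 2 \<le> j \<and> j \<le> b - 1) \<or> (i = 3 \<and> w + 2 \<le> j \<and> j \<le> a)"
  by (simp add: Dxw_def)

lemma step_x: assumes "1 \<le> x" "x \<le> b - 2"
  shows "insert (2, x+1) (Dxw a b x w - {(1,x)}) = Dxw a b (x-1) w"
  using assms by (auto simp: Dxw_def)

lemma step_w: assumes "1 \<le> w" "w \<le> x" "w \<le> a - 1"
  shows "insert (3, w+1) (Dxw a b x w - {(2,w)}) = Dxw a b x (w-1)"
  using assms by (auto simp: Dxw_def)

lemma exc_sub: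
  assumes ab: "0 < a" "a < b" and D: "D \<in> excited [b-1,b-1,a] mu" and mu: "diagram mu = M0 a b"
  shows "\<exists>x w. x \<le> b - 2 \<and> w \<le> x \<and> w \<le> a - 1 \<and> D = Dxw a b x w"
  using D
proof (induction rule: excited.induct)
  case base
  have "M0 a b = Dxw a b (b-2) (a-1)" using ab unfolding M0_def Dxw_def by (intro Collect_cong) auto
  thus ?case using mu ab by (intro exI[of _ "b-2"] exI[of _ "a-1"]) auto
next
  case (step D i j)
  from step.IH obtain x w where v: "x \<le> b - 2" "w \<le> x" "w \<le> a - 1" and Dd: "D = Dxw a b x w" by blast
  have ij: "(i,j) \<in> Dxw a b x w" and L: "(i+1,j+1) \<in> diagram [b-1,b-1,a]"
    and n1: "(i, j+1) \<notin> Dxw a b x w" and n2: "(i+1, j) \<notin> Dxw a b x w" and n3: "(i+1,j+1) \<notin> Dxw a b x w"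
    using step.hyps(2-6) unfolding Dd by simp_all
  from ij consider "i = 1" "1 \<le> j" "j \<le> x" | "i = 2" "1 \<le> j" "j \<le> w" | "i = 2" "x + 2 \<le> j" "j \<le> b - 1"
    | "i = 3" "w + 2 \<le> j" "j \<le> a" unfolding Dxw_mem by blast
  thus ?case
  proof cases
    case 1
    have jx: "j = x" using n1 1 by (auto simp: Dxw_mem)
    have wx: "w < x" using n2 1 jx by (auto simp: Dxw_mem)
    have "insert (i+1,j+1) (D - {(i,j)}) = Dxw a b (x-1) w" using step_x[of x b a w] 1 jx Dd wx v by (simp add: numeral_2_eq_2)
    moreover have "x - 1 \<le> b - 2" "w \<le> x - 1" using v wx by auto
    ultimately show ?thesis using v(3) by blast
  next
    case 2
    have jw: "j = w" using n1 2 v by (auto simp: Dxw_mem)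
    have "insert (i+1,j+1) (D - {(i,j)}) = Dxw a b x (w-1)" using step_w[of w x a b] 2 jw Dd v by (simp add: numeral_2_eq_2 numeral_3_eq_3)
    moreover have "w - 1 \<le> x" "w - 1 \<le> a - 1" using v by auto
    ultimately show ?thesis using v(1) by blast
  next
    case 3
    have "j + 1 \<le> a" using L 3 by (simp add: diagram3)
    hence "(i+1,j+1) \<in> Dxw a b x w" using 3 v by (simp add: Dxw_mem)
    thus ?thesis using n3 by simp
  next
    case 4
    thus ?thesis using L by (simp add: diagram3)
  qed
qed

lemma exc_sup:
  assumes ab: "0 < a" "a < b" and mu: "diagram mu = M0 a b"
    and v: "x \<le> b - 2" "w \<le> x" "w \<le> a - 1"
  shows "Dxw a b x w \<in> excited [b-1,b-1,a] mu"
proof -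
  have base: "Dxw a b (b-2) (a-1) \<in> excited [b-1,b-1,a] mu"
  proof -
    have "M0 a b = Dxw a b (b-2) (a-1)" using ab by (auto simp: M0_def Dxw_def)
    moreover have "diagram mu \<in> excited [b-1,b-1,a] mu" by (rule excited.base)
    ultimately show ?thesis using mu by simp
  qed
  have W: "Dxw a b (b-2) (a-1-t) \<in> excited [b-1,b-1,a] mu" if "t \<le> a - 1" for t
    using that
  proof (induction t)
    case 0 thus ?case using base by simp
  next
    case (Suc t)
    define w' where "w' = a - 1 - t"
    have w'1: "1 \<le> w'" "w' \<le> b - 2" "w' \<le> a - 1" using Suc.prems ab by (auto simp: w'_def)
    have IH: "Dxw a b (b-2) w' \<in> excited [b-1,b-1,a] mu" using Suc by (simp add: w'_def)
    have "insert (2+1, w'+1) (Dxw a b (b-2) w' - {(2,w')}) \<in> excited [b-1,b-1,a] mu"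
      by (rule excited.step[OF IH]) (use w'1 ab in \<open>auto simp: Dxw_mem diagram3\<close>)
    moreover have "insert (2+1, w'+1) (Dxw a b (b-2) w' - {(2,w')}) = Dxw a b (b-2) (w'-1)"
      using step_w[of w' "b-2" a b] w'1 by (simp add: numeral_2_eq_2 numeral_3_eq_3)
    ultimately show ?case by (simp add: w'_def)
  qed
  have X: "Dxw a b (b-2-t) w \<in> excited [b-1,b-1,a] mu" if "t \<le> b - 2 - w" for t
    using that
  proof (induction t)
    case 0 
    have "Dxw a b (b-2) (a-1-(a-1-w)) \<in> excited [b-1,b-1,a] mu" by (rule W) simp
    moreover have "a-1-(a-1-w) = w" using v ab by simp
    ultimately show ?case by simp
  next
    case (Suc t)
    define x' where "x' = b - 2 - t"
    have x'1: "1 \<le> x'" "w < x'" "x' \<le> b - 2" using Suc.prems ab v by (auto simp: x'_def)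
    have IH: "Dxw a b x' w \<in> excited [b-1,b-1,a] mu" using Suc by (simp add: x'_def)
    have "insert (1+1, x'+1) (Dxw a b x' w - {(1,x')}) \<in> excited [b-1,b-1,a] mu"
      by (rule excited.step[OF IH]) (use x'1 ab in \<open>auto simp: Dxw_mem diagram3\<close>)
    moreover have "insert (1+1, x'+1) (Dxw a b x' w - {(1,x')}) = Dxw a b (x'-1) w"
      using step_x[of x' b a w] x'1 by (simp add: numeral_2_eq_2)
    ultimately show ?case by (simp add: x'_def)
  qed
  have "Dxw a b (b-2-(b-2-x)) w \<in> excited [b-1,b-1,a] mu" by (rule X) (use v in simp)
  moreover have "b-2-(b-2-x) = x" using v by simp
  ultimately show ?thesis by simp
qed



definition h2 :: "nat \<Rightarrow> nat \<Rightarrow> nat \<Rightarrow> nat" where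
  "h2 a b j = (if j \<le> a then b - j + 1 else b - j)"

lemma hook2: assumes "0 < a" "a < b" "1 \<le> j" "j \<le> b - 1"
  shows "hook [b-1,b-1,a] (2,j) = h2 a b j"
proof -
  have S: "{c' \<in> diagram [b-1,b-1,a]. (fst c' = fst (2::nat,j) \<and> snd c' \<ge> snd (2::nat,j)) \<or> (snd c' = snd (2::nat,j) \<and> fst c' \<ge> fst (2::nat,j))}
     = (\<lambda>k. (2,k)) ` {j..b-1} \<union> (if j \<le> a then {(3,j)} else {})" (is "?L = ?R")
  proof
    show "?L \<subseteq> ?R"
    proof
      fix c assume "c \<in> ?L"
      then obtain p q where c: "c = (p,q)" and h: "(p,q) \<in> diagram [b-1,b-1,a]" "(p = 2 \<and> q \<ge> j) \<or> (q = j \<and> p \<ge> 2)"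
        by (cases c) auto
      from h show "c \<in> ?R" unfolding c diagram3 by (auto split: if_splits)
    qed
    show "?R \<subseteq> ?L" using assms by (auto simp: diagram3 split: if_splits)
  qed
  have c1: "card ((\<lambda>k. (2::nat,k)) ` {j..b-1}) = b - 1 - j + 1"
    using assms by (subst card_image) (auto simp: inj_on_def)
  show ?thesis
  proof (cases "j \<le> a")
    case True
    have "card ?R = card ((\<lambda>k. (2::nat,k)) ` {j..b-1}) + card {(3::nat,j)}"
      using True by (subst card_Un_disjoint[symmetric]) auto
    thus ?thesis unfolding hook_def S using c1 True assms by (simp add: h2_def)
  next
    case False
    thus ?thesis unfolding hook_def S using c1 assms by (simp add: h2_def)
  qed
qed

lemma hook3: assumes "0 < a" "a < b" "1 \<le> j" "j \<le> a"
  shows "hook [b-1,b-1,a] (3,j) = a - j + 1"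
proof -
  have S: "{c' \<in> diagram [b-1,b-1,a]. (fst c' = fst (3::nat,j) \<and> snd c' \<ge> snd (3::nat,j)) \<or> (snd c' = snd (3::nat,j) \<and> fst c' \<ge> fst (3::nat,j))}
     = (\<lambda>k. (3,k)) ` {j..a}" (is "?L = ?R")
  proof
    show "?L \<subseteq> ?R"
    proof
      fix c assume "c \<in> ?L"
      then obtain p q where c: "c = (p,q)" and h: "(p,q) \<in> diagram [b-1,b-1,a]" "(p = 3 \<and> q \<ge> j) \<or> (q = j \<and> p \<ge> 3)"
        by (cases c) auto
      from h show "c \<in> ?R" unfolding c diagram3 by auto
    qed
    show "?R \<subseteq> ?L" using assms by (auto simp: diagram3)
  qed
  have c1: "card ((\<lambda>k. (3::nat,k)) ` {j..a}) = a - j + 1"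
    using assms by (subst card_image) (auto simp: inj_on_def)
  show ?thesis unfolding hook_def S using c1 by simp
qed

definition P2 :: "nat \<Rightarrow> nat \<Rightarrow> nat \<Rightarrow> nat" where "P2 a b w = (\<Prod>j\<in>{1..w}. h2 a b j)"
definition Q :: "nat \<Rightarrow> nat \<Rightarrow> nat \<Rightarrow> nat" where "Q a b x = (\<Prod>j\<in>{x+2..b-1}. h2 a b j)"
definition G :: "nat \<Rightarrow> nat \<Rightarrow> nat" where "G a k = (\<Prod>j\<in>{k+1..a}. a - j + 1)"
definition CC :: "nat \<Rightarrow> nat \<Rightarrow> nat \<Rightarrow> nat" where
  "CC a b y = (\<Sum>w\<in>{0..min (b-2-y) (a-1)}. P2 a b w * Q a b (b-2-y) * G a (w+1))"

lemma row1_card: "card {c \<in> Dxw a b x w. fst c = 1} = x"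
proof -
  have "{c \<in> Dxw a b x w. fst c = 1} = (\<lambda>j. (1,j)) ` {1..x}" by (auto simp: Dxw_def)
  moreover have "card ((\<lambda>j. (1::nat,j)) ` {1..x}) = x" by (subst card_image) (auto simp: inj_on_def)
  ultimately show ?thesis by simp
qed

lemma Dxw_inj: assumes "w1 \<le> x" "w2 \<le> x" "Dxw a b x w1 = Dxw a b x w2" shows "w1 = w2"
proof (rule ccontr)
  assume ne: "w1 \<noteq> w2"
  show False
  proof (cases "w1 < w2")
    case True
    have "(2, w2) \<in> Dxw a b x w2" using True by (simp add: Dxw_mem)
    moreover have "(2, w2) \<notin> Dxw a b x w1" using True assms(1,2) by (simp add: Dxw_mem)
    ultimately show False using assms(3) by blast
  next
    case False
    hence F: "w2 < w1" using ne by simp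
    have "(2, w1) \<in> Dxw a b x w1" using F by (simp add: Dxw_mem)
    moreover have "(2, w1) \<notin> Dxw a b x w2" using F assms(1,2) by (simp add: Dxw_mem)
    ultimately show False using assms(3) by blast
  qed
qed

lemma prod_Dxw: assumes ab: "0 < a" "a < b" and v: "x \<le> b - 2" "w \<le> x" "w \<le> a - 1"
  shows "(\<Prod>c\<in>{c \<in> Dxw a b x w. fst c \<noteq> 1}. hook [b-1,b-1,a] c) = P2 a b w * Q a b x * G a (w+1)"
proof -
  let ?f = "hook [b-1,b-1,a]"
  have S: "{c \<in> Dxw a b x w. fst c \<noteq> 1} = ((\<lambda>j. (2,j)) ` {1..w} \<union> (\<lambda>j. (2,j)) ` {x+2..b-1}) \<union> (\<lambda>j. (3,j)) ` {w+2..a}"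
    by (auto simp: Dxw_def)
  have i2: "inj_on (\<lambda>j. (2::nat,j)) A" for A by (auto simp: inj_on_def)
  have i3: "inj_on (\<lambda>j. (3::nat,j)) A" for A by (auto simp: inj_on_def)
  have "(\<Prod>c\<in>{c \<in> Dxw a b x w. fst c \<noteq> 1}. ?f c)
     = (\<Prod>c\<in>(\<lambda>j. (2,j)) ` {1..w}. ?f c) * (\<Prod>c\<in>(\<lambda>j. (2,j)) ` {x+2..b-1}. ?f c) * (\<Prod>c\<in>(\<lambda>j. (3,j)) ` {w+2..a}. ?f c)"
    unfolding S using v
    by (subst prod.union_disjoint, simp, simp, force, subst prod.union_disjoint) auto
  also have "\<dots> = (\<Prod>j\<in>{1..w}. ?f (2,j)) * (\<Prod>j\<in>{x+2..b-1}. ?f (2,j)) * (\<Prod>j\<in>{w+2..a}. ?f (3,j))"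
    by (simp add: prod.reindex[OF i2] prod.reindex[OF i3])
  also have "\<dots> = P2 a b w * Q a b x * G a (w+1)"
  proof -
    have "(\<Prod>j\<in>{1..w}. ?f (2,j)) = P2 a b w" unfolding P2_def
    proof (rule prod.cong[OF refl])
      fix j assume "j \<in> {1..w}" thus "hook [b-1,b-1,a] (2,j) = h2 a b j" using ab v by (intro hook2) auto
    qed
    moreover have "(\<Prod>j\<in>{x+2..b-1}. ?f (2,j)) = Q a b x" unfolding Q_def
    proof (rule prod.cong[OF refl])
      fix j assume "j \<in> {x+2..b-1}" thus "hook [b-1,b-1,a] (2,j) = h2 a b j" using ab v by (intro hook2) auto
    qed
    moreover have "(\<Prod>j\<in>{w+2..a}. ?f (3,j)) = (\<Prod>j\<in>{w+2..a}. a - j + 1)"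
    proof (rule prod.cong[OF refl])
      fix j assume "j \<in> {w+2..a}" thus "hook [b-1,b-1,a] (3,j) = a - j + 1" using ab v by (intro hook3) auto
    qed
    moreover have "G a (w+1) = (\<Prod>j\<in>{w+2..a}. a - j + 1)" by (simp add: G_def)
    ultimately show ?thesis by simp
  qed
  finally show ?thesis .
qed

lemma NN_CC: assumes ab: "0 < a" "a < b" and y: "y \<le> b - 2"
  shows "NN_coeff {a,b} y = CC a b y"
proof -
  define x where "x = b - 2 - y"
  obtain mu where mu: "muI {a,b} = mu" by blast
  have dmu: "diagram mu = M0 a b" using muI_ab[OF ab] mu by simp
  have set: "{D \<in> excited (lambdaI {a,b}) (muI {a,b}). card {c \<in> D. fst c = 1} = sI {a,b} - y}
     = Dxw a b x ` {0..min x (a-1)}"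
  proof
    show "{D \<in> excited (lambdaI {a,b}) (muI {a,b}). card {c \<in> D. fst c = 1} = sI {a,b} - y} \<subseteq> Dxw a b x ` {0..min x (a-1)}"
    proof
      fix D assume "D \<in> {D \<in> excited (lambdaI {a,b}) (muI {a,b}). card {c \<in> D. fst c = 1} = sI {a,b} - y}"
      hence D: "D \<in> excited [b-1,b-1,a] mu" and cD: "card {c \<in> D. fst c = 1} = b - 2 - y"
        using lambdaI_ab[OF ab] sI_ab[OF ab] mu by auto
      obtain x' w where v: "x' \<le> b - 2" "w \<le> x'" "w \<le> a - 1" and Dd: "D = Dxw a b x' w"
        using exc_sub[OF ab D dmu] by blast
      have "x' = x" using cD Dd row1_card x_def by simp
      thus "D \<in> Dxw a b x ` {0..min x (a-1)}" using v Dd by auto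
    qed
    show "Dxw a b x ` {0..min x (a-1)} \<subseteq> {D \<in> excited (lambdaI {a,b}) (muI {a,b}). card {c \<in> D. fst c = 1} = sI {a,b} - y}"
    proof
      fix D assume "D \<in> Dxw a b x ` {0..min x (a-1)}"
      then obtain w where w: "w \<le> x" "w \<le> a - 1" and Dd: "D = Dxw a b x w" by auto
      have "D \<in> excited [b-1,b-1,a] mu" using exc_sup[OF ab dmu, of x w] w Dd x_def by simp
      moreover have "card {c \<in> D. fst c = 1} = b - 2 - y" using Dd row1_card x_def by simp
      ultimately show "D \<in> {D \<in> excited (lambdaI {a,b}) (muI {a,b}). card {c \<in> D. fst c = 1} = sI {a,b} - y}"
        using lambdaI_ab[OF ab] sI_ab[OF ab] mu by auto
    qed
  qed
  have inj: "inj_on (Dxw a b x) {0..min x (a-1)}"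
    by (rule inj_onI) (use Dxw_inj in auto)
  have "NN_coeff {a,b} y = (\<Sum>D\<in>Dxw a b x ` {0..min x (a-1)}. \<Prod>c\<in>{c \<in> D. fst c \<noteq> 1}. hook (lambdaI {a,b}) c)"
    unfolding NN_coeff_def set ..
  also have "\<dots> = (\<Sum>D\<in>Dxw a b x ` {0..min x (a-1)}. \<Prod>c\<in>{c \<in> D. fst c \<noteq> 1}. hook [b-1,b-1,a] c)"
    by (simp only: lambdaI_ab[OF ab])
  also have "\<dots> = (\<Sum>w\<in>{0..min x (a-1)}. \<Prod>c\<in>{c \<in> Dxw a b x w. fst c \<noteq> 1}. hook [b-1,b-1,a] c)"
    by (rule sum.reindex[OF inj, unfolded comp_def])
  also have "\<dots> = (\<Sum>w\<in>{0..min x (a-1)}. P2 a b w * Q a b x * G a (w+1))"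
  proof (rule sum.cong[OF refl])
    fix w assume "w \<in> {0..min x (a-1)}"
    thus "(\<Prod>c\<in>{c \<in> Dxw a b x w. fst c \<noteq> 1}. hook [b-1,b-1,a] c) = P2 a b w * Q a b x * G a (w+1)"
      using ab x_def by (intro prod_Dxw) auto
  qed
  finally show ?thesis by (simp add: CC_def x_def)
qed



lemma unimodal_cong1: assumes "\<And>k. k \<le> m \<Longrightarrow> f k = g k" "unimodal f m" shows "unimodal g m"
proof -
  obtain i where i: "i \<le> m" "\<forall>k < i. f k \<le> f (Suc k)" "\<forall>k. i \<le> k \<and> k < m \<longrightarrow> f k \<ge> f (Suc k)"
    using assms(2) unfolding unimodal_def by blast
  have "\<forall>k < i. g k \<le> g (Suc k)"
  proof (intro allI impI)
    fix k assume "k < i" thus "g k \<le> g (Suc k)" using i assms(1)[of k] assms(1)[of "Suc k"] by auto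
  qed
  moreover have "\<forall>k. i \<le> k \<and> k < m \<longrightarrow> g k \<ge> g (Suc k)"
  proof (intro allI impI)
    fix k assume "i \<le> k \<and> k < m" thus "g k \<ge> g (Suc k)" using i assms(1)[of k] assms(1)[of "Suc k"] by auto
  qed
  ultimately show ?thesis unfolding unimodal_def using i(1) by blast
qed

lemma unimodal_cong: assumes "\<And>k. k \<le> m \<Longrightarrow> f k = g k" shows "unimodal f m = unimodal g m"
  using unimodal_cong1[of m f g] unimodal_cong1[of m g f] assms by metis

lemma unimodal_valley: assumes "unimodal f m" "k + 2 \<le> m" "f k > f (Suc k)" "f (Suc k) < f (Suc (Suc k))"
  shows False
proof -
  obtain i where i: "i \<le> m" "\<forall>k < i. f k \<le> f (Suc k)" "\<forall>k. i \<le> k \<and> k < m \<longrightarrow> f k \<ge> f (Suc k)"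
    using assms(1) unfolding unimodal_def by blast
  show False
  proof (cases "i \<le> Suc k")
    case True
    thus False using i(3)[rule_format, of "Suc k"] assms by auto
  next
    case False
    thus False using i(2)[rule_format, of k] assms by auto
  qed
qed

lemma unimodal_intro: assumes "i \<le> m" "\<And>k. k < i \<Longrightarrow> f k \<le> f (Suc k)" "\<And>k. i \<le> k \<Longrightarrow> k < m \<Longrightarrow> f k \<ge> f (Suc k)"
  shows "unimodal f m"
  unfolding unimodal_def using assms by blast

definition SS :: "nat \<Rightarrow> nat \<Rightarrow> nat \<Rightarrow> nat" where
  "SS a b m = (\<Sum>w<m. P2 a b w * G a (w+1))"

lemma CC_SS: "CC a b y = Q a b (b-2-y) * SS a b (min (b-2-y) (a-1) + 1)"
proof -
  have "{0..min (b-2-y) (a-1)} = {..<min (b-2-y) (a-1) + 1}" by auto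
  moreover have "(\<Sum>w\<in>A. P2 a b w * Q a b x * G a (w+1)) = Q a b x * (\<Sum>w\<in>A. P2 a b w * G a (w+1))" for A x
    by (subst sum_distrib_left) (rule sum.cong, simp_all add: mult_ac)
  ultimately show ?thesis unfolding CC_def SS_def by simp
qed

lemma SS_Suc: "SS a b (Suc m) = SS a b m + P2 a b m * G a (m+1)"
  by (simp add: SS_def)

lemma P2_Suc: "P2 a b (Suc w) = P2 a b w * h2 a b (Suc w)"
  unfolding P2_def by (simp add: prod.nat_ivl_Suc' mult.commute)

lemma Q_step: assumes "x + 2 \<le> b - 1" shows "Q a b x = h2 a b (x+2) * Q a b (x+1)"
  unfolding Q_def using assms by (simp add: prod.atLeast_Suc_atMost)

lemma G_step: assumes "k + 1 \<le> a" shows "G a k = (a - k) * G a (k+1)"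
  unfolding G_def using assms by (simp add: prod.atLeast_Suc_atMost Suc_diff_Suc)

lemma G_a: "G a a = 1" by (simp add: G_def)

lemma G_pos: "G a k > 0" unfolding G_def by (simp add: prod_pos)

lemma Q_pos: "Q a b x > 0" unfolding Q_def by (rule prod_pos) (auto simp: h2_def)

lemma P2_pos: assumes "w < b" shows "P2 a b w > 0" unfolding P2_def using assms
  by (intro prod_pos) (auto simp: h2_def)

lemma S_id: assumes "k \<le> a" "a < b"
  shows "(b - a) * SS a b k + G a 0 = G a k * P2 a b k"
  using assms
proof (induction k)
  case 0 thus ?case by (simp add: SS_def P2_def)
next
  case (Suc k)
  have IH: "(b - a) * SS a b k + G a 0 = G a k * P2 a b k" using Suc by simp
  have Gk: "G a k = (a - k) * G a (k+1)" using Suc.prems by (intro G_step) simp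
  have h: "h2 a b (Suc k) = b - k" using Suc.prems by (simp add: h2_def)
  have gen: "u * Gn * P + v * (P * Gn) = P * Gn * (u + v)" for u v Gn P :: nat
    by (simp add: algebra_simps)
  have "(b - a) * SS a b (Suc k) + G a 0 = G a k * P2 a b k + (b - a) * (P2 a b k * G a (k+1))"
    using IH unfolding SS_Suc distrib_left by linarith
  also have "\<dots> = P2 a b k * G a (k+1) * ((a - k) + (b - a))" unfolding Gk by (rule gen)
  also have "\<dots> = P2 a b k * G a (k+1) * (b - k)" using Suc.prems by simp
  also have "\<dots> = G a (Suc k) * P2 a b (Suc k)" unfolding P2_Suc h by (simp add: mult_ac)
  finally show ?case .
qed



lemma CC_a1: assumes "1 < b" "y \<le> b - 2" shows "CC 1 b y = Q 1 b (b-2-y)"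
proof -
  have "SS 1 b 1 = 1" by (simp add: SS_def P2_def G_def)
  thus ?thesis by (simp add: CC_SS)
qed

lemma uni_a1: assumes "1 < b" shows "unimodal (CC 1 b) (b-2)"
proof (rule unimodal_intro[of "b-2"])
  fix k assume k: "k < b - 2"
  define x where "x = b - 2 - Suc k"
  have e: "b - 2 - k = x + 1" using k x_def by simp
  have "Q 1 b x = h2 1 b (x+2) * Q 1 b (x+1)" using k x_def by (intro Q_step) simp
  moreover have "h2 1 b (x+2) \<ge> 1" using k x_def by (simp add: h2_def)
  ultimately have "Q 1 b (x+1) \<le> Q 1 b x" using mult_le_mono1[of 1 "h2 1 b (x+2)" "Q 1 b (x+1)"] by simp
  moreover have "CC 1 b k = Q 1 b (x+1)" using CC_a1[of b k] e k assms by simp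
  moreover have "CC 1 b (Suc k) = Q 1 b x" using CC_a1[of b "Suc k"] x_def k assms by simp
  ultimately show "CC 1 b k \<le> CC 1 b (Suc k)" by simp
qed auto


lemma CC_a2: assumes "2 < b" "y \<le> b - 2"
  shows "CC 2 b y = Q 2 b (b-2-y) * (if b - 2 - y \<ge> 1 then b + 1 else 1)"
proof -
  have s1: "SS 2 b 1 = 1" by (simp add: SS_def P2_def G_def)
  have s2: "SS 2 b (Suc (Suc 0)) = b + 1" using assms by (simp add: SS_def P2_def G_def h2_def numeral_2_eq_2)
  show ?thesis
  proof (cases "b - 2 - y \<ge> 1")
    case True
    hence "min (b-2-y) (2-1) + 1 = 2" by simp
    have "CC 2 b y = Q 2 b (b-2-y) * SS 2 b (min (b-2-y) (2-1) + 1)" by (rule CC_SS)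
    thus ?thesis using True s2 \<open>min (b-2-y) (2-1) + 1 = 2\<close> by simp
  next
    case False
    hence "min (b-2-y) (2-1) + 1 = 1" by simp
    have "CC 2 b y = Q 2 b (b-2-y) * SS 2 b (min (b-2-y) (2-1) + 1)" by (rule CC_SS)
    thus ?thesis using False s1 \<open>min (b-2-y) (2-1) + 1 = 1\<close> by simp
  qed
qed

lemma uni_a2: assumes "2 < b" shows "unimodal (CC 2 b) (b-2)"
proof (rule unimodal_intro[of "b-3"])
  fix k assume k: "k < b - 3"
  define x where "x = b - 2 - Suc k"
  have x1: "x \<ge> 1" using k x_def by simp
  have e: "b - 2 - k = x + 1" using k x_def by simp
  have "Q 2 b x = h2 2 b (x+2) * Q 2 b (x+1)" using k x_def by (intro Q_step) simp
  moreover have "x + 2 < b" using k x_def by simp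
  hence "h2 2 b (x+2) \<ge> 1" by (auto simp: h2_def)
  ultimately have "Q 2 b (x+1) \<le> Q 2 b x" using mult_le_mono1[of 1 "h2 2 b (x+2)" "Q 2 b (x+1)"] by simp
  hence "Q 2 b (x+1) * (b+1) \<le> Q 2 b x * (b+1)" by (rule mult_le_mono1)
  moreover have "CC 2 b k = Q 2 b (x+1) * (b+1)" using CC_a2[of b k] e k assms by simp
  moreover have "CC 2 b (Suc k) = Q 2 b x * (b+1)" using CC_a2[of b "Suc k"] x_def k assms x1 by simp
  ultimately show "CC 2 b k \<le> CC 2 b (Suc k)" by metis
next
  fix k assume k: "b - 3 \<le> k" "k < b - 2"
  hence kk: "k = b - 3" by simp
  have "Q 2 b 0 = h2 2 b (0+2) * Q 2 b (0+1)" using assms by (intro Q_step) simp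
  hence "Q 2 b 0 = h2 2 b 2 * Q 2 b 1" by (simp add: numeral_2_eq_2)
  moreover have "h2 2 b 2 = b - 1" using assms by (simp add: h2_def)
  moreover have "CC 2 b k = Q 2 b 1 * (b+1)"
  proof -
    have "b - 2 - k = 1" using kk assms by simp
    thus ?thesis using CC_a2[of b k] k assms by simp
  qed
  moreover have "CC 2 b (Suc k) = Q 2 b 0"
  proof -
    have "b - 2 - Suc k = 0" using kk assms by simp
    thus ?thesis using CC_a2[of b "Suc k"] k assms by simp
  qed
  moreover have "(b - 1) * Q 2 b 1 \<le> (b + 1) * Q 2 b 1" by (intro mult_le_mono1) simp
  ultimately show "CC 2 b (Suc k) \<le> CC 2 b k" by (simp only: mult.commute)
qed simp

lemma uni_34: "unimodal (CC 3 4) 2"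
proof -
  have "CC 3 4 0 = 18" "CC 3 4 1 = 12" "CC 3 4 2 = 12"
    by (simp_all add: CC_def P2_def Q_def G_def h2_def numeral_eq_Suc atLeast0_atMost_Suc prod.atLeast_Suc_atMost)
  thus ?thesis unfolding unimodal_def by (intro exI[of _ 0]) (auto simp: less_Suc_eq numeral_eq_Suc)
qed


lemma nonuni: assumes a3: "3 \<le> a" and ab: "a < b" and n34: "\<not> (a = 3 \<and> b = 4)"
  shows "\<not> unimodal (CC a b) (b-2)"
proof
  assume U: "unimodal (CC a b) (b-2)"
  define d where "d = b - a"
  define F where "F = Q a b (a-1)"
  define U' where "U' = SS a b (a-2)"
  define V where "V = P2 a b (a-2)"
  define W where "W = P2 a b (a-3)"
  define S where "S = SS a b (a-3)"
  have d1: "d \<ge> 1" using ab d_def by simp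
  have Fpos: "F > 0" unfolding F_def by (rule Q_pos)
  have Wpos: "W > 0" unfolding W_def using ab by (intro P2_pos) simp
  have G0: "G a 0 > 0" by (rule G_pos)
  have Q2: "Q a b (a-2) = (d+1) * F"
  proof -
    have "Q a b (a-2) = h2 a b (a-2+2) * Q a b (a-2+1)" using a3 ab by (intro Q_step) simp
    moreover have "a-2+2 = a" "a-2+1 = a-1" using a3 by auto
    moreover have "h2 a b a = d + 1" using ab d_def by (simp add: h2_def)
    ultimately show ?thesis by (simp add: F_def)
  qed
  have Q3: "Q a b (a-3) = (d+2) * ((d+1) * F)"
  proof -
    have "Q a b (a-3) = h2 a b (a-3+2) * Q a b (a-3+1)" using a3 ab by (intro Q_step) simp
    moreover have "a-3+2 = a-1" "a-3+1 = a-2" using a3 by auto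
    moreover have "h2 a b (a-1) = d + 2" using ab a3 d_def by (simp add: h2_def)
    ultimately show ?thesis using Q2 by simp
  qed
  have Ga1: "G a (a-1) = 1" using G_step[of "a-1" a] a3 by (simp add: G_a)
  have Ga2: "G a (a-2) = 2"
  proof -
    have "G a (a-2) = (a - (a-2)) * G a (a-2+1)" using a3 by (intro G_step) simp
    moreover have "a-2+1 = a-1" "a - (a-2) = 2" using a3 by auto
    ultimately show ?thesis using Ga1 by simp
  qed
  have SSa: "SS a b a = SS a b (a-1) + P2 a b (a-1)"
    using SS_Suc[of a b "a-1"] a3 by (simp add: G_a)
  have SSa1: "SS a b (a-1) = U' + V"
    using SS_Suc[of a b "a-2"] a3 Ga1 by (simp add: U'_def V_def numeral_2_eq_2 Suc_diff_Suc)
  have P2a1: "P2 a b (a-1) = V * (d+2)"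
  proof -
    have "P2 a b (Suc (a-2)) = P2 a b (a-2) * h2 a b (Suc (a-2))" by (rule P2_Suc)
    moreover have "Suc (a-2) = a-1" using a3 by simp
    moreover have "h2 a b (a-1) = d + 2" using ab a3 d_def by (simp add: h2_def)
    ultimately show ?thesis by (simp add: V_def)
  qed
  have Ueq: "U' = S + 2 * W"
  proof -
    have "SS a b (Suc (a-3)) = SS a b (a-3) + P2 a b (a-3) * G a (a-3+1)" by (rule SS_Suc)
    moreover have "Suc (a-3) = a-2" "a-3+1 = a-2" using a3 by auto
    ultimately show ?thesis using Ga2 by (simp add: U'_def S_def W_def)
  qed
  have Veq: "V = W * (d+3)"
  proof -
    have "P2 a b (Suc (a-3)) = P2 a b (a-3) * h2 a b (Suc (a-3))" by (rule P2_Suc)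
    moreover have "Suc (a-3) = a-2" using a3 by simp
    moreover have "h2 a b (a-2) = d + 3" using ab a3 d_def by (simp add: h2_def)
    ultimately show ?thesis by (simp add: V_def W_def)
  qed
  have key: "d * U' + G a 0 = 2 * V"
    using S_id[of "a-2" a b] ab Ga2 by (simp add: d_def U'_def V_def)
  have Spos: "S > 0 \<or> d \<ge> 2"
  proof (cases "a = 3")
    case True
    hence "b \<noteq> 4" using n34 by simp
    hence "b \<ge> 5" using True ab by simp
    hence "d \<ge> 2" using True d_def by linarith
    thus ?thesis by blast
  next
    case False
    hence a4: "a \<ge> 4" using a3 by simp
    have "SS a b (Suc (a-4)) = SS a b (a-4) + P2 a b (a-4) * G a (a-4+1)" by (rule SS_Suc)
    moreover have "Suc (a-4) = a-3" using a4 by simp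
    moreover have "P2 a b (a-4) > 0" using ab by (intro P2_pos) simp
    moreover have "G a (a-4+1) > 0" by (rule G_pos)
    ultimately show ?thesis by (simp add: S_def)
  qed
  define k where "k = d - 1"
  have kk: "k + 2 \<le> b - 2" using a3 ab d_def k_def by simp
  have C0: "CC a b k = F * (U' + V + V * (d+2))"
  proof -
    have "b - 2 - k = a - 1" "min (a-1) (a-1) + 1 = a" using a3 ab d_def k_def by auto
    thus ?thesis using SSa SSa1 P2a1 by (simp add: CC_SS F_def)
  qed
  have C1: "CC a b (Suc k) = (d+1) * F * (U' + V)"
  proof -
    have "b - 2 - Suc k = a - 2" "min (a-2) (a-1) + 1 = a - 1" using a3 ab d_def k_def by auto
    thus ?thesis using SSa1 Q2 by (simp add: CC_SS)
  qed
  have C2: "CC a b (Suc (Suc k)) = (d+2) * ((d+1) * F) * U'"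
  proof -
    have "b - 2 - Suc (Suc k) = a - 3" "min (a-3) (a-1) + 1 = a - 2" using a3 ab d_def k_def by auto
    thus ?thesis using Q3 by (simp add: CC_SS U'_def)
  qed
  have i1: "(d+1) * (U' + V) < U' + V + V * (d+2)"
  proof -
    have "d * U' < 2 * V" using key G0 by linarith
    thus ?thesis by (simp add: algebra_simps)
  qed
  have i2: "U' + V < (d+2) * U'"
  proof -
    have dW: "d * W \<ge> W" using d1 by simp
    have e1: "W * (d+3) = d * W + 3 * W" by (simp add: algebra_simps)
    have e2: "d * (S + 2 * W) = d * S + 2 * (d * W)" by (simp add: algebra_simps)
    have "W * (d+3) < d * (S + 2 * W) + (S + 2 * W)"
    proof (cases "S > 0")
      case True
      show ?thesis unfolding e1 e2 using True dW by linarith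
    next
      case False
      hence "d \<ge> 2" using Spos by simp
      hence "d * W \<ge> 2 * W" by simp
      thus ?thesis unfolding e1 e2 using Wpos by linarith
    qed
    moreover have "(d+2) * U' = d * U' + 2 * U'" by (simp add: algebra_simps)
    moreover have "d * U' = d * (S + 2 * W)" using Ueq by simp
    ultimately show ?thesis using Ueq Veq by linarith
  qed
  have "CC a b k > CC a b (Suc k)"
  proof -
    have "F * ((d+1) * (U' + V)) < F * (U' + V + V * (d+2))" by (rule mult_strict_left_mono[OF i1 Fpos])
    moreover have "CC a b (Suc k) = F * ((d+1) * (U' + V))" using C1 by (simp only: mult_ac)
    ultimately show ?thesis using C0 by (simp only:)
  qed
  moreover have "CC a b (Suc k) < CC a b (Suc (Suc k))"
  proof -
    have "((d+1) * F) * (U' + V) < ((d+1) * F) * ((d+2) * U')" by (rule mult_strict_left_mono[OF i2]) (use Fpos in simp)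
    moreover have "CC a b (Suc (Suc k)) = ((d+1) * F) * ((d+2) * U')" using C2 by (simp only: mult_ac)
    ultimately show ?thesis using C1 by (simp only:)
  qed
  ultimately show False using unimodal_valley[OF U kk] by simp
qed


theorem corollary6p2:
  fixes a b :: nat
  assumes "0 < a" and "a < b"
  shows "unimodal (NN_coeff {a, b}) (sI {a, b}) \<longleftrightarrow> a = 1 \<or> a = 2 \<or> (a = 3 \<and> b = 4)"
proof -
  have "unimodal (NN_coeff {a, b}) (sI {a, b}) = unimodal (CC a b) (b-2)"
    unfolding sI_ab[OF assms] by (rule unimodal_cong) (use NN_CC[OF assms] in auto)
  also have "\<dots> \<longleftrightarrow> a = 1 \<or> a = 2 \<or> (a = 3 \<and> b = 4)"
  proof (cases "a = 1")
    case True thus ?thesis using uni_a1[of b] assms by simp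
  next
    case n1: False
    show ?thesis
    proof (cases "a = 2")
      case True thus ?thesis using uni_a2[of b] assms by simp
    next
      case n2: False
      show ?thesis
      proof (cases "a = 3 \<and> b = 4")
        case True thus ?thesis using uni_34 by simp
      next
        case False
        have "3 \<le> a" using n1 n2 assms by simp
        thus ?thesis using nonuni[of a b] False n1 n2 assms by simp
      qed
    qed
  qed
  finally show ?thesis .
qed

end
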